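(* Let $n,m\ge 2$, let $2\le r\le n$ and $2\le s\le m$, let $A\subseteq V(K_n)$ with $|A|=r$ and $B\subseteq V(K_m)$ with $|B|=s$. If $S$ is a total $2$-dominating set of $K_n\Box K_m$, then \[ \bigl|S\cap\bigl[(A\times V(K_m))\cup(V(K_n)\times B)\bigr]\bigr|\ge\gamma_{2t}(K_r\Box K_s). \]
   Context: For a graph $G=(V,E)$, a set $S\subseteq V$ is a total $2$-dominating set if every vertex of $V$ (including those in $S$) is adjacent to at least $2$ vertices of $S$; $\gamma_{2t}(G)$ is the minimum cardinality of such a set. $G\Box H$ denotes the Cartesian product: vertex set $V(G)\times V(H)$, with $(u_1,v_1)\sim(u_2,v_2)$ iff either $u_1=u_2$ and $v_1\sim v_2$, or $v_1=v_2$ and $u_1\sim u_2$. $K_n$ is the complete graph on $n$ vertices. *)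

theory Defs
  imports Main
begin

definition total_k_dominating :: "'a set \<Rightarrow> ('a \<Rightarrow> 'a \<Rightarrow> bool) \<Rightarrow> nat \<Rightarrow> 'a set \<Rightarrow> bool" where
  "total_k_dominating V adj k S \<longleftrightarrow>
     S \<subseteq> V \<and> (\<forall>v\<in>V. card {u\<in>S. adj v u} \<ge> k)"

definition gamma_2t :: "'a set \<Rightarrow> ('a \<Rightarrow> 'a \<Rightarrow> bool) \<Rightarrow> nat" where
  "gamma_2t V adj = (LEAST c. \<exists>S. total_k_dominating V adj 2 S \<and> card S = c)"

definition K_V :: "nat \<Rightarrow> nat set" where "K_V n = {0..<n}"
definition K_adj :: "nat \<Rightarrow> nat \<Rightarrow> bool" where "K_adj x y \<longleftrightarrow> x \<noteq> y"

definition box_V :: "'a set \<Rightarrow> 'b set \<Rightarrow> ('a \<times> 'b) set" where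
  "box_V V1 V2 = V1 \<times> V2"
definition box_adj :: "('a \<Rightarrow> 'a \<Rightarrow> bool) \<Rightarrow> ('b \<Rightarrow> 'b \<Rightarrow> bool) \<Rightarrow> 'a \<times> 'b \<Rightarrow> 'a \<times> 'b \<Rightarrow> bool" where
  "box_adj adj1 adj2 p q \<longleftrightarrow>
     (fst p = fst q \<and> adj2 (snd p) (snd q)) \<or> (snd p = snd q \<and> adj1 (fst p) (fst q))"

end

theory Submission
  imports Defs
begin

definition rw :: "(nat\<times>nat) set \<Rightarrow> nat set \<Rightarrow> nat \<Rightarrow> nat" where
  "rw I B a = card {b\<in>B. (a,b)\<in>I}"
definition cl :: "(nat\<times>nat) set \<Rightarrow> nat set \<Rightarrow> nat \<Rightarrow> nat" where
  "cl I A b = card {a\<in>A. (a,b)\<in>I}"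
definition good :: "nat set \<Rightarrow> nat set \<Rightarrow> (nat\<times>nat) set \<Rightarrow> (nat \<Rightarrow> nat) \<Rightarrow> (nat \<Rightarrow> nat) \<Rightarrow> bool" where
  "good A B I R C \<longleftrightarrow> I \<subseteq> A \<times> B \<and>
     (\<forall>a\<in>A. \<forall>b\<in>B. (if (a,b)\<in>I then 4 else 2) \<le> rw I B a + R a + cl I A b + C b)"
definition tot :: "nat set \<Rightarrow> nat set \<Rightarrow> (nat\<times>nat) set \<Rightarrow> (nat \<Rightarrow> nat) \<Rightarrow> (nat \<Rightarrow> nat) \<Rightarrow> nat" where
  "tot A B I R C = card I + sum R A + sum C B"
definition cert :: "nat set \<Rightarrow> nat set \<Rightarrow> nat \<Rightarrow> bool" where
  "cert A B t \<longleftrightarrow> (\<exists>D. good A B D (\<lambda>_. 0) (\<lambda>_. 0) \<and> card D \<le> t)"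

lemma cert_mono: "cert A B t \<Longrightarrow> t \<le> u \<Longrightarrow> cert A B u"
  unfolding cert_def by auto

lemma good_le: "good A B I R C \<Longrightarrow> a \<in> A \<Longrightarrow> b \<in> B \<Longrightarrow>
   (if (a,b)\<in>I then 4 else 2) \<le> rw I B a + R a + cl I A b + C b"
  unfolding good_def by blast

lemma sum_rw: assumes "finite A" "finite B" "I \<subseteq> A \<times> B"
  shows "sum (rw I B) A = card I"
proof -
  have "I = Sigma A (\<lambda>a. {b\<in>B. (a,b)\<in>I})" using assms(3) by auto
  then have "card I = card (Sigma A (\<lambda>a. {b\<in>B. (a,b)\<in>I}))" by simp
  also have "\<dots> = (\<Sum>a\<in>A. card {b\<in>B. (a,b)\<in>I})" using assms(1,2)
    by (intro card_SigmaI) auto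
  finally have "card I = (\<Sum>a\<in>A. card {b\<in>B. (a,b)\<in>I})" .
  then show ?thesis unfolding rw_def by simp
qed

definition swp :: "(nat\<times>nat) set \<Rightarrow> (nat\<times>nat) set" where "swp I = prod.swap ` I"

lemma swp_mem[simp]: "(x,y) \<in> swp I \<longleftrightarrow> (y,x) \<in> I"
  unfolding swp_def by force
lemma swp_swp[simp]: "swp (swp I) = I"
  unfolding swp_def by (simp add: image_image)
lemma card_swp[simp]: "card (swp I) = card I"
  unfolding swp_def by (simp add: card_image)
lemma rw_swp[simp]: "rw (swp I) A b = cl I A b"
  unfolding rw_def cl_def by simp
lemma cl_swp[simp]: "cl (swp I) B a = rw I B a"
  unfolding rw_def cl_def by simp
lemma swp_sub: "swp I \<subseteq> B \<times> A \<longleftrightarrow> I \<subseteq> A \<times> B"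
  unfolding swp_def by auto

lemma good_swp: "good B A (swp I) C R \<longleftrightarrow> good A B I R C"
  unfolding good_def swp_sub by (auto simp: add_ac)

lemma sum_cl: assumes "finite A" "finite B" "I \<subseteq> A \<times> B"
  shows "sum (cl I A) B = card I"
  using sum_rw[of B A "swp I"] assms swp_sub[of I B A] by simp

lemma tot_swp: "tot B A (swp I) C R = tot A B I R C"
  unfolding tot_def by simp

lemma cert_swp: "cert B A t \<Longrightarrow> cert A B t"
proof -
  assume "cert B A t"
  then obtain D where "good B A D (\<lambda>_. 0) (\<lambda>_. 0)" "card D \<le> t" unfolding cert_def by blast
  then have "good A B (swp D) (\<lambda>_. 0) (\<lambda>_. 0)" "card (swp D) \<le> t"
    by (metis good_swp swp_swp, simp)
  then show ?thesis unfolding cert_def by blast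
qed

lemma rw_insert: "finite B \<Longrightarrow> rw (insert (a,b) I) B x =
   (if x = a \<and> b \<in> B \<and> (a,b) \<notin> I then rw I B x + 1 else rw I B x)"
proof -
  assume f: "finite B"
  show ?thesis
  proof (cases "x = a \<and> b \<in> B \<and> (a,b) \<notin> I")
    case True
    then have "{y\<in>B. (x,y)\<in>insert (a,b) I} = insert b {y\<in>B. (x,y)\<in>I}" by auto
    then show ?thesis using True f unfolding rw_def by simp
  next
    case False
    then have "{y\<in>B. (x,y)\<in>insert (a,b) I} = {y\<in>B. (x,y)\<in>I}" by auto
    then show ?thesis using False unfolding rw_def by simp
  qed
qed

lemma cl_insert: "finite A \<Longrightarrow> cl (insert (a,b) I) A y =
   (if y = b \<and> a \<in> A \<and> (a,b) \<notin> I then cl I A y + 1 else cl I A y)"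
proof -
  assume f: "finite A"
  have "insert (a,b) I = swp (insert (b,a) (swp I))" unfolding swp_def by (simp add: image_image)
  then have "cl (insert (a,b) I) A y = rw (insert (b,a) (swp I)) A y"
    by (metis cl_swp swp_swp)
  also have "\<dots> = (if y = b \<and> a \<in> A \<and> (b,a) \<notin> swp I then rw (swp I) A y + 1 else rw (swp I) A y)"
    using rw_insert[OF f] by blast
  finally show ?thesis by simp
qed


lemma ne_of_card: "1 \<le> card X \<Longrightarrow> X \<noteq> {}" by auto

lemma good_sub: "good A B I R C \<Longrightarrow> I \<subseteq> A \<times> B" unfolding good_def by blast

lemma rw_le: "finite B \<Longrightarrow> rw I B x \<le> card B"
  unfolding rw_def by (intro card_mono) auto
lemma rw_full: "finite B \<Longrightarrow> rw I B x = card B \<Longrightarrow> y \<in> B \<Longrightarrow> (x,y) \<in> I"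
proof -
  assume f: "finite B" and e: "rw I B x = card B" and y: "y \<in> B"
  have "{b\<in>B. (x,b)\<in>I} = B" using card_subset_eq[of B "{b\<in>B. (x,b)\<in>I}"] f e unfolding rw_def by auto
  then show ?thesis using y by blast
qed
lemma rw_zero: "finite B \<Longrightarrow> rw I B x = 0 \<Longrightarrow> y \<in> B \<Longrightarrow> (x,y) \<notin> I"
  unfolding rw_def by auto
lemma rw_pos: "finite B \<Longrightarrow> y \<in> B \<Longrightarrow> (x,y) \<in> I \<Longrightarrow> 1 \<le> rw I B x"
proof -
  assume f: "finite B" and y: "y \<in> B" "(x,y) \<in> I"
  have "{b\<in>B. (x,b)\<in>I} \<noteq> {}" using y by auto
  moreover have "finite {b\<in>B. (x,b)\<in>I}" using f by simp
  ultimately have "0 < card {b\<in>B. (x,b)\<in>I}" by (simp add: card_gt_0_iff)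
  then show ?thesis unfolding rw_def by simp
qed
lemma rw_lt: "finite B \<Longrightarrow> rw I B x < card B \<Longrightarrow> \<exists>y\<in>B. (x,y) \<notin> I"
proof (rule ccontr)
  assume f: "finite B" and l: "rw I B x < card B" and n: "\<not> (\<exists>y\<in>B. (x,y) \<notin> I)"
  then have "{b\<in>B. (x,b)\<in>I} = B" by auto
  then show False using l unfolding rw_def by simp
qed
lemma rw_ex: "finite B \<Longrightarrow> 1 \<le> rw I B x \<Longrightarrow> \<exists>y\<in>B. (x,y) \<in> I"
proof (rule ccontr)
  assume "1 \<le> rw I B x" "\<not> (\<exists>y\<in>B. (x,y) \<in> I)"
  then have "{b\<in>B. (x,b)\<in>I} \<noteq> {}" unfolding rw_def by (intro ne_of_card)
  then show False using \<open>\<not> (\<exists>y\<in>B. (x,y) \<in> I)\<close> by blast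
qed
lemma rw_mono: "finite B \<Longrightarrow> I \<subseteq> J \<Longrightarrow> rw I B x \<le> rw J B x"
  unfolding rw_def by (intro card_mono) auto

lemma cl_zero: "finite A \<Longrightarrow> cl I A y = 0 \<Longrightarrow> x \<in> A \<Longrightarrow> (x,y) \<notin> I"
  using rw_zero[of A "swp I" y x] by simp
lemma cl_pos: "finite A \<Longrightarrow> x \<in> A \<Longrightarrow> (x,y) \<in> I \<Longrightarrow> 1 \<le> cl I A y"
  using rw_pos[of A x y "swp I"] by simp
lemma cl_ex: "finite A \<Longrightarrow> 1 \<le> cl I A y \<Longrightarrow> \<exists>x\<in>A. (x,y) \<in> I"
  using rw_ex[of A "swp I" y] by simp
lemma cl_mono: "finite A \<Longrightarrow> I \<subseteq> J \<Longrightarrow> cl I A y \<le> cl J A y"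
  unfolding cl_def by (intro card_mono) auto

lemma sum_upd: "finite A \<Longrightarrow> a \<in> A \<Longrightarrow> sum (R(a:=v)) A + R a = sum R A + (v::nat)"
proof -
  assume f: "finite A" and a: "a \<in> A"
  have "sum (R(a:=v)) A = v + sum (R(a:=v)) (A-{a})" using f a by (simp add: sum.remove)
  moreover have "sum (R(a:=v)) (A-{a}) = sum R (A-{a})" by (rule sum.cong) auto
  moreover have "sum R A = R a + sum R (A-{a})" using f a by (simp add: sum.remove)
  ultimately show ?thesis by simp
qed

lemma tot_eq: "finite A \<Longrightarrow> finite B \<Longrightarrow> I \<subseteq> A \<times> B \<Longrightarrow>
   tot A B I R C = sum (\<lambda>x. rw I B x + R x) A + sum C B"
  unfolding tot_def by (simp add: sum.distrib sum_rw)
lemma tot_eq2: "finite A \<Longrightarrow> finite B \<Longrightarrow> I \<subseteq> A \<times> B \<Longrightarrow>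
   tot A B I R C = sum R A + sum (\<lambda>y. cl I A y + C y) B"
  unfolding tot_def by (simp add: sum.distrib sum_cl)

lemma good_move:
  assumes g: "good A B I R C" and fA: "finite A" and fB: "finite B"
    and a: "a\<in>A" "b\<in>B" "(a,b)\<notin>I" "0 < R a"
    and h3: "3 \<le> rw I B a + R a + cl I A b + C b"
  shows "good A B (insert (a,b) I) (R(a := R a - 1)) C"
  unfolding good_def
proof (intro conjI ballI)
  show "insert (a,b) I \<subseteq> A\<times>B" using g a unfolding good_def by auto
  fix x y assume x: "x\<in>A" and y: "y\<in>B"
  have e1: "rw (insert (a,b) I) B x + (R(a := R a - 1)) x = rw I B x + R x"
    using rw_insert[OF fB, of a b I x] a by auto
  have e2: "cl I A y \<le> cl (insert (a,b) I) A y" using cl_insert[OF fA, of a b I y] by auto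
  have e3: "cl (insert (a,b) I) A b = cl I A b + 1" using cl_insert[OF fA, of a b I b] a by auto
  show "(if (x,y) \<in> insert (a,b) I then 4 else 2) \<le> rw (insert (a,b) I) B x + (R(a := R a - 1)) x + cl (insert (a,b) I) A y + C y"
  proof (cases "(x,y) = (a,b)")
    case True
    then show ?thesis using e1 e3 h3 by auto
  next
    case False
    then have "(x,y) \<in> insert (a,b) I \<longleftrightarrow> (x,y) \<in> I" by auto
    then show ?thesis using good_le[OF g x y] e1 e2 by (smt (verit) add.commute add_le_mono le_refl le_trans)
  qed
qed

lemma good_move_col:
  assumes g: "good A B I R C" and fA: "finite A" and fB: "finite B"
    and a: "x\<in>A" "b\<in>B" "(x,b)\<notin>I" "0 < C b"
    and h3: "3 \<le> rw I B x + R x + cl I A b + C b"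
  shows "good A B (insert (x,b) I) R (C(b := C b - 1))"
proof -
  have g': "good B A (swp I) C R" using g good_swp[of B A I C R] by blast
  have "good B A (insert (b,x) (swp I)) (C(b := C b - 1)) R"
    using good_move[OF g' fB fA, of b x] a h3 by simp
  moreover have "insert (b,x) (swp I) = swp (insert (x,b) I)" unfolding swp_def by auto
  ultimately show ?thesis using good_swp[of B A "insert (x,b) I" "C(b := C b - 1)" R] by simp
qed

lemma good_del:
  assumes g: "good A B I R C" and fA: "finite A" and fB: "finite B"
    and a: "a\<in>A" "0 < R a" "rw I B a = card B" "3 \<le> card B"
  shows "good A B I (R(a := R a - 1)) C"
  unfolding good_def
proof (intro conjI ballI)
  show "I \<subseteq> A\<times>B" using g unfolding good_def by auto
  fix x y assume x: "x\<in>A" and y: "y\<in>B"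
  show "(if (x,y) \<in> I then 4 else 2) \<le> rw I B x + (R(a := R a - 1)) x + cl I A y + C y"
  proof (cases "x = a")
    case True
    have "(a,y) \<in> I" using rw_full[OF fB a(3) y] .
    then have "1 \<le> cl I A y" using cl_pos[OF fA a(1)] by blast
    then show ?thesis using True a by auto
  next
    case False
    then show ?thesis using good_le[OF g x y] by auto
  qed
qed

lemma cert_2A:
  assumes fA: "finite A" and fB: "finite B" and cA: "2 \<le> card A" and cB: "2 \<le> card B"
    and t: "2 * card A \<le> t"
  shows "cert A B t"
proof -
  obtain b1 where b1: "b1 \<in> B" using cB by fastforce
  have "1 \<le> card (B - {b1})" using cB b1 fB by simp
  then have "B - {b1} \<noteq> {}" by (rule ne_of_card)
  then obtain b2 where "b2 \<in> B - {b1}" by blast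
  then have b: "b1 \<in> B" "b2 \<in> B" "b1 \<noteq> b2" using b1 by auto
  define D where "D = A \<times> {b1,b2}"
  have cD: "card D = 2 * card A" unfolding D_def using b fA by (simp add: card_cartesian_product)
  have r: "rw D B x = 2" if "x \<in> A" for x
  proof -
    have "{b\<in>B. (x,b)\<in>D} = {b1,b2}" using that b unfolding D_def by auto
    then show ?thesis unfolding rw_def using b by simp
  qed
  have c: "cl D A y = card A" if "y \<in> {b1,b2}" for y
  proof -
    have "{a\<in>A. (a,y)\<in>D} = A" using that unfolding D_def by auto
    then show ?thesis unfolding cl_def by simp
  qed
  have "good A B D (\<lambda>_. 0) (\<lambda>_. 0)"
    unfolding good_def
  proof (intro conjI ballI)
    show "D \<subseteq> A \<times> B" unfolding D_def using b by auto
    fix x y assume xy: "x \<in> A" "y \<in> B"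
    have rx: "rw D B x = 2" using r xy(1) .
    show "(if (x,y) \<in> D then 4 else 2) \<le> rw D B x + 0 + cl D A y + 0"
    proof (cases "(x,y) \<in> D")
      case True
      then have "y \<in> {b1,b2}" unfolding D_def by auto
      then have "cl D A y = card A" using c by blast
      then show ?thesis using True rx cA by simp
    next
      case False
      then show ?thesis using rx by simp
    qed
  qed
  moreover have "card D \<le> t" using cD t by simp
  ultimately show ?thesis unfolding cert_def by blast
qed

lemma cert_2B:
  assumes fA: "finite A" and fB: "finite B" and cA: "2 \<le> card A" and cB: "2 \<le> card B"
    and t: "2 * card B \<le> t"
  shows "cert A B t"
  using cert_2A[OF fB fA cB cA t] cert_swp by blast

lemma cert_AB:
  assumes fA: "finite A" and fB: "finite B" and cA: "2 \<le> card A" and cB: "2 \<le> card B"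
    and t: "card A + card B \<le> t"
  shows "cert A B t"
proof (cases "card A = 2 \<or> card B = 2")
  case True
  then show ?thesis
  proof
    assume "card A = 2" then show ?thesis using cert_2A[OF assms(1-4)] t cB by simp
  next
    assume "card B = 2" then show ?thesis using cert_2B[OF assms(1-4)] t cA by simp
  qed
next
  case False
  then have cA3: "3 \<le> card A" and cB3: "3 \<le> card B" using cA cB by auto
  obtain a0 where a0: "a0 \<in> A" using cA by fastforce
  obtain b0 where b0: "b0 \<in> B" using cB by fastforce
  define D where "D = ({a0} \<times> B) \<union> (A \<times> {b0})"
  have cD: "card D \<le> card A + card B"
    unfolding D_def using card_Un_le[of "{a0} \<times> B" "A \<times> {b0}"]
    by (simp add: card_cartesian_product)
  have r: "rw D B x = (if x = a0 then card B else 1)" if "x \<in> A" for x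
  proof (cases "x = a0")
    case True
    then have "{b\<in>B. (x,b)\<in>D} = B" unfolding D_def by auto
    then show ?thesis using True unfolding rw_def by simp
  next
    case False
    then have "{b\<in>B. (x,b)\<in>D} = {b0}" unfolding D_def using b0 that by auto
    then show ?thesis using False unfolding rw_def by simp
  qed
  have c: "cl D A y = (if y = b0 then card A else 1)" if "y \<in> B" for y
  proof (cases "y = b0")
    case True
    then have "{a\<in>A. (a,y)\<in>D} = A" unfolding D_def by auto
    then show ?thesis using True unfolding cl_def by simp
  next
    case False
    then have "{a\<in>A. (a,y)\<in>D} = {a0}" unfolding D_def using a0 that by auto
    then show ?thesis using False unfolding cl_def by simp
  qed
  have "good A B D (\<lambda>_. 0) (\<lambda>_. 0)"
    unfolding good_def
  proof (intro conjI ballI)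
    show "D \<subseteq> A \<times> B" unfolding D_def using a0 b0 by auto
    fix x y assume xy: "x \<in> A" "y \<in> B"
    show "(if (x,y) \<in> D then 4 else 2) \<le> rw D B x + 0 + cl D A y + 0"
    proof -
    have mem: "(x,y) \<in> D \<longleftrightarrow> x = a0 \<or> y = b0" unfolding D_def using xy by auto
    have r1: "1 \<le> rw D B x" and r3: "x = a0 \<Longrightarrow> 3 \<le> rw D B x"
      using r[OF xy(1)] cB3 by auto
    have c1: "1 \<le> cl D A y" and c3: "y = b0 \<Longrightarrow> 3 \<le> cl D A y"
      using c[OF xy(2)] cA3 by auto
    show ?thesis
    proof (cases "(x,y) \<in> D")
      case True
      then have "x = a0 \<or> y = b0" using mem by blast
      then have "4 \<le> rw D B x + cl D A y" using r1 r3 c1 c3 by fastforce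
      then show ?thesis using True by simp
    next
      case False
      then show ?thesis using r1 c1 by simp
    qed
    qed
  qed
  moreover have "card D \<le> t" using cD t by simp
  ultimately show ?thesis unfolding cert_def by blast
qed


lemma tot_ge_rho: "finite A \<Longrightarrow> finite B \<Longrightarrow> I \<subseteq> A \<times> B \<Longrightarrow>
   sum (\<lambda>x. rw I B x + R x) A \<le> tot A B I R C"
  using tot_eq by simp

lemma sum_two: "finite A \<Longrightarrow> x \<in> A \<Longrightarrow> y \<in> A \<Longrightarrow> x \<noteq> y \<Longrightarrow> f x + f y \<le> sum (f::nat\<Rightarrow>nat) A"
proof -
  assume f: "finite A" and xy: "x \<in> A" "y \<in> A" "x \<noteq> y"
  have "sum f {x,y} \<le> sum f A" using f xy by (intro sum_mono2) auto
  then show ?thesis using xy by simp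
qed

lemma row_case:
  assumes fA: "finite A" and fB: "finite B" and cA: "2 \<le> card A" and cB: "2 \<le> card B"
    and g: "good A B I R C" and aA: "a \<in> A" and Ra: "0 < R a"
    and IH: "\<And>I' R' C'. good A B I' R' C' \<Longrightarrow> sum R' A + sum C' B < sum R A + sum C B
               \<Longrightarrow> cert A B (tot A B I' R' C')"
  shows "cert A B (tot A B I R C)"
proof -
  have IsAB: "I \<subseteq> A \<times> B" using g good_sub by blast
  have fI: "finite I" using IsAB fA fB finite_subset by blast
  have LM: "cert A B (tot A B I R C)"
    if x: "x \<in> A" "y \<in> B" "(x,y) \<notin> I" "0 < R x" "3 \<le> rw I B x + R x + cl I A y + C y" for x y
  proof -
    have g': "good A B (insert (x,y) I) (R(x := R x - 1)) C" using good_move[OF g fA fB] x by blast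
    have s: "sum (R(x := R x - 1)) A + R x = sum R A + (R x - 1)" using sum_upd[OF fA x(1)] .
    have "tot A B (insert (x,y) I) (R(x := R x - 1)) C = tot A B I R C"
      unfolding tot_def using s x(3,4) fI by simp
    moreover have "sum (R(x := R x - 1)) A + sum C B < sum R A + sum C B" using s x(4) by simp
    ultimately show ?thesis using IH[OF g'] by simp
  qed
  have LMc: "cert A B (tot A B I R C)"
    if x: "x \<in> A" "y \<in> B" "(x,y) \<notin> I" "0 < C y" "3 \<le> rw I B x + R x + cl I A y + C y" for x y
  proof -
    have g': "good A B (insert (x,y) I) R (C(y := C y - 1))" using good_move_col[OF g fA fB] x by blast
    have s: "sum (C(y := C y - 1)) B + C y = sum C B + (C y - 1)" using sum_upd[OF fB x(2)] .
    have "tot A B (insert (x,y) I) R (C(y := C y - 1)) = tot A B I R C"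
      unfolding tot_def using s x(3,4) fI by simp
    moreover have "sum R A + sum (C(y := C y - 1)) B < sum R A + sum C B" using s x(4) by simp
    ultimately show ?thesis using IH[OF g'] by simp
  qed
  have trho: "sum (\<lambda>x. rw I B x + R x) A \<le> tot A B I R C" using tot_ge_rho[OF fA fB IsAB] .
  have tkap: "sum (\<lambda>y. cl I A y + C y) B \<le> tot A B I R C" using tot_eq2[OF fA fB IsAB] by simp
  have Liii: "cert A B (tot A B I R C)"
    if x: "x \<in> A" "0 < R x" "rw I B x = card B" for x
  proof (cases "3 \<le> card B")
    case True
    have g': "good A B I (R(x := R x - 1)) C" using good_del[OF g fA fB x True] .
    have s: "sum (R(x := R x - 1)) A + R x = sum R A + (R x - 1)" using sum_upd[OF fA x(1)] .
    have "tot A B I (R(x := R x - 1)) C \<le> tot A B I R C"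
      unfolding tot_def using s x(2) by simp
    moreover have "sum (R(x := R x - 1)) A + sum C B < sum R A + sum C B" using s x(2) by simp
    ultimately show ?thesis using IH[OF g'] cert_mono by blast
  next
    case False
    then have cB2: "card B = 2" using cB by simp
    have "4 \<le> tot A B I R C"
    proof -
      obtain x' where x': "x' \<in> A" "x' \<noteq> x"
      proof -
        have "1 \<le> card (A - {x})" using cA x(1) fA by simp
        then have "A - {x} \<noteq> {}" by (rule ne_of_card)
        then obtain z where "z \<in> A - {x}" by blast
        then show ?thesis using that by blast
      qed
      show ?thesis
      proof (cases "1 \<le> rw I B x' + R x'")
        case True
        have "(rw I B x + R x) + (rw I B x' + R x') \<le> sum (\<lambda>x. rw I B x + R x) A"
          using sum_two[OF fA x(1) x'(1), where f = "\<lambda>x. rw I B x + R x"] x' by simp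
        then show ?thesis using trho True x cB2 by linarith
      next
        case False
        then have r0: "rw I B x' = 0" "R x' = 0" by auto
        have "\<forall>y\<in>B. 2 \<le> cl I A y + C y"
        proof
          fix y assume y: "y \<in> B"
          have "(x',y) \<notin> I" using rw_zero[OF fB r0(1) y] .
          then show "2 \<le> cl I A y + C y" using good_le[OF g x'(1) y] r0 by simp
        qed
        then have "sum (\<lambda>_. 2) B \<le> sum (\<lambda>y. cl I A y + C y) B" by (intro sum_mono) auto
        then show ?thesis using tkap cB2 by simp
      qed
    qed
    then show ?thesis using cert_2B[OF fA fB cA cB] cB2 by simp
  qed
  show ?thesis
  proof (cases "\<exists>b\<in>B. (a,b) \<notin> I \<and> 3 \<le> rw I B a + R a + cl I A b + C b")
    case True
    then show ?thesis using LM aA Ra by blast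
  next
    case False
    then have nM: "\<And>b. b \<in> B \<Longrightarrow> (a,b) \<notin> I \<Longrightarrow> rw I B a + R a + cl I A b + C b \<le> 2"
      by force
    consider "3 \<le> rw I B a + R a" | "rw I B a + R a = 2" | "rw I B a + R a = 1" using Ra by linarith
    then show ?thesis
    proof cases
      case 1
      have "rw I B a = card B"
      proof (rule ccontr)
        assume "rw I B a \<noteq> card B"
        then have "rw I B a < card B" using rw_le[OF fB] le_neq_implies_less by blast
        then obtain b where "b \<in> B" "(a,b) \<notin> I" using rw_lt[OF fB] by blast
        then show False using nM 1 by fastforce
      qed
      then show ?thesis using Liii aA Ra by blast
    next
      case 2
      then have "rw I B a < card B" using Ra cB by linarith
      then obtain b0 where b0: "b0 \<in> B" "(a,b0) \<notin> I" using rw_lt[OF fB] by blast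
      then have "cl I A b0 + C b0 = 0" using nM 2 by fastforce
      then have cl0: "cl I A b0 = 0" "C b0 = 0" by auto
      have "\<forall>x\<in>A. 2 \<le> rw I B x + R x"
      proof
        fix x assume x: "x \<in> A"
        have "(x,b0) \<notin> I" using cl_zero[OF fA cl0(1) x] .
        then show "2 \<le> rw I B x + R x" using good_le[OF g x b0(1)] cl0 by simp
      qed
      then have "sum (\<lambda>_. 2) A \<le> sum (\<lambda>x. rw I B x + R x) A" by (intro sum_mono) auto
      then have "2 * card A \<le> tot A B I R C" using trho by simp
      then show ?thesis using cert_2A[OF fA fB cA cB] by simp
    next
      case 3
      have rw0: "rw I B a = 0" using 3 Ra by linarith
      have kap1: "\<forall>b\<in>B. cl I A b + C b = 1"
      proof
        fix b assume b: "b \<in> B"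
        have "(a,b) \<notin> I" using rw_zero[OF fB rw0 b] .
        then show "cl I A b + C b = 1" using nM[OF b] good_le[OF g aA b] 3 by simp
      qed
      show ?thesis
      proof (cases "\<exists>b\<in>B. 0 < C b")
        case True
        then obtain b where b: "b \<in> B" "0 < C b" by blast
        have clb: "cl I A b = 0" "C b = 1" using kap1 b by force+
        have notin: "\<And>x. x \<in> A \<Longrightarrow> (x,b) \<notin> I" using cl_zero[OF fA clb(1)] by blast
        show ?thesis
        proof (cases "\<exists>x\<in>A. 2 \<le> rw I B x + R x")
          case True
          then obtain x where x: "x \<in> A" "2 \<le> rw I B x + R x" by blast
          show ?thesis using LMc[OF x(1) b(1) notin[OF x(1)] b(2)] x clb by simp
        next
          case False
          have rho1: "\<forall>x\<in>A. rw I B x + R x = 1"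
          proof
            fix x assume x: "x \<in> A"
            show "rw I B x + R x = 1" using good_le[OF g x b(1)] notin[OF x] clb False x by fastforce
          qed
          have Iempty: "I = {}"
          proof (rule ccontr)
            assume "I \<noteq> {}"
            then obtain x y where xy: "(x,y) \<in> I" by auto
            then have xyAB: "x \<in> A" "y \<in> B" using IsAB by auto
            show False using good_le[OF g xyAB] xy rho1 kap1 xyAB by fastforce
          qed
          have "sum (\<lambda>x. rw I B x + R x) A = card A" using rho1 by simp
          moreover have "sum (\<lambda>y. cl I A y + C y) B = card B" using kap1 by simp
          moreover have "tot A B I R C = sum (\<lambda>x. rw I B x + R x) A + sum (\<lambda>y. cl I A y + C y) B"
            unfolding tot_def using Iempty by (simp add: rw_def cl_def)
          ultimately show ?thesis using cert_AB[OF fA fB cA cB] by simp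
        qed
      next
        case False
        then have C0: "\<forall>b\<in>B. C b = 0" by auto
        then have cl1: "\<forall>b\<in>B. cl I A b = 1" using kap1 by auto
        show ?thesis
        proof (cases "\<exists>x\<in>A. 0 < R x \<and> (\<exists>y\<in>B. (x,y) \<notin> I \<and> 3 \<le> rw I B x + R x + cl I A y + C y)")
          case True
          then show ?thesis using LM by blast
        next
          case False
          note nM2 = this
          show ?thesis
          proof (cases "\<exists>x\<in>A. 0 < R x \<and> rw I B x = card B")
            case True
            then show ?thesis using Liii by blast
          next
            case False
            note niii = this
            define K where "K = {x\<in>A. rw I B x = 0}"
            have aK: "a \<in> K" using rw0 aA unfolding K_def by simp
            have KA: "K \<subseteq> A" unfolding K_def by auto
            have nK: "3 \<le> rw I B x \<and> R x = 0" if x: "x \<in> A" "x \<notin> K" for x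
            proof -
              have "1 \<le> rw I B x" using x unfolding K_def by simp
              then obtain y where y: "y \<in> B" "(x,y) \<in> I" using rw_ex[OF fB] by blast
              have rho3: "3 \<le> rw I B x + R x" using good_le[OF g x(1) y(1)] y cl1 C0 by fastforce
              have R0: "R x = 0"
              proof (rule ccontr)
                assume "R x \<noteq> 0"
                then have Rp: "0 < R x" by simp
                then have "rw I B x \<noteq> card B" using niii x(1) by blast
                then have "rw I B x < card B" using rw_le[OF fB] le_neq_implies_less by blast
                then obtain y' where y': "y' \<in> B" "(x,y') \<notin> I" using rw_lt[OF fB] by blast
                then show False using nM2 x(1) Rp rho3 by fastforce
              qed
              then show ?thesis using rho3 by simp
            qed
            have Kpos: "1 \<le> R x" if x: "x \<in> K" for x
            proof -
              obtain b where b: "b \<in> B" using cB by fastforce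
              have xA: "x \<in> A" and r0: "rw I B x = 0" using x unfolding K_def by auto
              have "(x,b) \<notin> I" using rw_zero[OF fB r0 b] .
              then show ?thesis using good_le[OF g xA b] r0 cl1 C0 b by simp
            qed
            show ?thesis
            proof (cases "\<exists>x\<in>K. x \<noteq> a")
              case True
              then obtain x1 where x1: "x1 \<in> K" "x1 \<noteq> a" by blast
              have fK: "finite K" using KA fA finite_subset by blast
              have cK: "2 \<le> card K"
              proof -
                have "card {a, x1} \<le> card K" using aK x1 fK by (intro card_mono) auto
                then show ?thesis using x1 by simp
              qed
              obtain b0 where b0: "b0 \<in> B" using cB by fastforce
              define D where "D = I \<union> K \<times> {b0}"
              have DAB: "D \<subseteq> A \<times> B" unfolding D_def using IsAB KA b0 by auto
              have cD: "card D \<le> card I + card K"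
                unfolding D_def using card_Un_le[of I "K \<times> {b0}"] by (simp add: card_cartesian_product)
              have "card K = sum (\<lambda>_. 1) K" by simp
              also have "\<dots> \<le> sum R K" using Kpos by (intro sum_mono) blast
              also have "\<dots> \<le> sum R A" using KA fA by (intro sum_mono2) auto
              finally have "card D \<le> tot A B I R C" using cD unfolding tot_def by simp
              have ID: "I \<subseteq> D" unfolding D_def by auto
              have rD1: "1 \<le> rw D B x" if x: "x \<in> A" for x
              proof (cases "x \<in> K")
                case True
                then have "(x,b0) \<in> D" unfolding D_def by auto
                then show ?thesis using rw_pos[OF fB b0] by blast
              next
                case False
                then show ?thesis using nK[OF x False] rw_mono[OF fB ID, of x] by simp
              qed
              have rD3: "3 \<le> rw D B x" if x: "x \<in> A" "x \<notin> K" for x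
                using nK[OF x] rw_mono[OF fB ID, of x] by simp
              have cD1: "1 \<le> cl D A y" if y: "y \<in> B" for y
                using cl1 y cl_mono[OF fA ID, of y] by fastforce
              have cD3: "card K + 1 \<le> cl D A b0"
              proof -
                have "1 \<le> cl I A b0" using cl1 b0 by simp
                then obtain x0 where x0: "x0 \<in> A" "(x0,b0) \<in> I" using cl_ex[OF fA] by blast
                have "x0 \<notin> K" using rw_pos[OF fB b0 x0(2)] unfolding K_def by simp
                then have "card (insert x0 K) = card K + 1" using fK by simp
                moreover have "card (insert x0 K) \<le> cl D A b0"
                  unfolding cl_def D_def using x0 KA fA by (intro card_mono) auto
                ultimately show ?thesis by simp
              qed
              have "good A B D (\<lambda>_. 0) (\<lambda>_. 0)"
                unfolding good_def
              proof (intro conjI ballI)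
                show "D \<subseteq> A \<times> B" using DAB .
                fix x y assume xy: "x \<in> A" "y \<in> B"
                show "(if (x,y) \<in> D then 4 else 2) \<le> rw D B x + 0 + cl D A y + 0"
                proof (cases "(x,y) \<in> D")
                  case True
                  show ?thesis
                  proof (cases "(x,y) \<in> I")
                    case True
                    then have "x \<notin> K" using rw_pos[OF fB xy(2) True] unfolding K_def by simp
                    then show ?thesis using rD3[OF xy(1)] cD1[OF xy(2)] \<open>(x,y) \<in> D\<close> by simp
                  next
                    case False
                    then have "x \<in> K" "y = b0" using \<open>(x,y) \<in> D\<close> unfolding D_def by auto
                    then show ?thesis using rD1[OF xy(1)] cD3 cK \<open>(x,y) \<in> D\<close> by simp
                  qed
                next
                  case False
                  then show ?thesis using rD1[OF xy(1)] cD1[OF xy(2)] by simp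
                qed
              qed
              then show ?thesis unfolding cert_def using \<open>card D \<le> tot A B I R C\<close> by blast
            next
              case False
              have Ka: "\<And>x. x \<in> A \<Longrightarrow> x \<noteq> a \<Longrightarrow> x \<notin> K" using False by blast
              have "sum (\<lambda>x. rw I B x + R x) A = (rw I B a + R a) + sum (\<lambda>x. rw I B x + R x) (A - {a})"
                using fA aA by (simp add: sum.remove)
              moreover have "sum (\<lambda>_. 3) (A - {a}) \<le> sum (\<lambda>x. rw I B x + R x) (A - {a})"
              proof (rule sum_mono)
                fix x assume "x \<in> A - {a}"
                then have "3 \<le> rw I B x \<and> R x = 0" using nK Ka by blast
                then show "3 \<le> rw I B x + R x" by simp
              qed
              moreover have "card (A - {a}) = card A - 1" using fA aA by simp
              ultimately have "1 + 3 * (card A - 1) \<le> sum (\<lambda>x. rw I B x + R x) A" using 3 by simp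
              then have "2 * card A \<le> tot A B I R C" using trho cA by linarith
              then show ?thesis using cert_2A[OF fA fB cA cB] by simp
            qed
          qed
        qed
      qed
    qed
  qed
qed

lemma main_ind:
  "\<And>A B I R C. finite A \<Longrightarrow> finite B \<Longrightarrow> 2 \<le> card A \<Longrightarrow> 2 \<le> card B \<Longrightarrow> good A B I R C
    \<Longrightarrow> sum R A + sum C B = k \<Longrightarrow> cert A B (tot A B I R C)"
proof (induction k rule: less_induct)
  case (less k A B I R C)
  show ?case
  proof (cases "\<exists>a\<in>A. 0 < R a")
    case True
    then obtain a where a: "a \<in> A" "0 < R a" by blast
    show ?thesis
    proof (rule row_case[OF less.prems(1-5) a])
      fix I' R' C' assume h: "good A B I' R' C'" "sum R' A + sum C' B < sum R A + sum C B"
      show "cert A B (tot A B I' R' C')"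
        apply (rule less.IH[OF _ less.prems(1-4) h(1) refl])
        using less.prems(6) h(2) by linarith
    qed
  next
    case False
    note nR = this
    show ?thesis
    proof (cases "\<exists>b\<in>B. 0 < C b")
      case True
      then obtain b where b: "b \<in> B" "0 < C b" by blast
      have g': "good B A (swp I) C R" using less.prems(5) good_swp[of B A I C R] by blast
      have "cert B A (tot B A (swp I) C R)"
      proof (rule row_case[OF less.prems(2,1,4,3) g' b])
        fix I' R' C' assume h: "good B A I' R' C'" "sum R' B + sum C' A < sum C B + sum R A"
        show "cert B A (tot B A I' R' C')"
          apply (rule less.IH[OF _ less.prems(2,1,4,3) h(1) refl])
          using less.prems(6) h(2) by linarith
      qed
      then have "cert B A (tot A B I R C)" using tot_swp[of B A I C R] by simp
      then show ?thesis by (rule cert_swp)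
    next
      case False
      have R0: "\<forall>a\<in>A. R a = 0" and C0: "\<forall>b\<in>B. C b = 0" using nR False by auto
      have "good A B I (\<lambda>_. 0) (\<lambda>_. 0)"
        unfolding good_def
      proof (intro conjI ballI)
        show "I \<subseteq> A \<times> B" using good_sub[OF less.prems(5)] .
        fix x y assume xy: "x \<in> A" "y \<in> B"
        have "(if (x,y) \<in> I then 4 else 2) \<le> rw I B x + R x + cl I A y + C y"
          using good_le[OF less.prems(5) xy] .
        moreover have "R x = 0" "C y = 0" using R0 C0 xy by auto
        ultimately show "(if (x,y) \<in> I then 4 else 2) \<le> rw I B x + 0 + cl I A y + 0" by simp
      qed
      moreover have "card I \<le> tot A B I R C" unfolding tot_def by simp
      ultimately show ?thesis unfolding cert_def by blast
    qed
  qed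
qed


lemma card_split1: "finite {y. P y} \<Longrightarrow> card {y. P y} = card {y. P y \<and> y \<noteq> b} + (if P b then 1 else 0)"
proof (cases "P b")
  case True
  assume f: "finite {y. P y}"
  have "{y. P y} = insert b {y. P y \<and> y \<noteq> b}" using True by auto
  moreover have "finite {y. P y \<and> y \<noteq> b}" using f by (rule finite_subset[rotated]) auto
  ultimately show ?thesis using True by simp
next
  case False
  then have "{y. P y} = {y. P y \<and> y \<noteq> b}" by auto
  then show ?thesis using False by simp
qed

lemma fin_row: "finite S \<Longrightarrow> finite {y. (a,y) \<in> S}"
proof -
  assume f: "finite S"
  have "{y. (a,y) \<in> S} = Pair a -` S" by auto
  moreover have "finite (Pair a -` S)" using f by (rule finite_vimageI) (auto simp: inj_on_def)
  ultimately show ?thesis by simp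
qed

lemma fin_col: "finite S \<Longrightarrow> finite {x. (x,b) \<in> S}"
proof -
  assume f: "finite S"
  have "{x. (x,b) \<in> S} = (\<lambda>x. (x,b)) -` S" by auto
  moreover have "finite ((\<lambda>x. (x,b)) -` S)" using f by (rule finite_vimageI) (auto simp: inj_on_def)
  ultimately show ?thesis by simp
qed

lemma count_nb:
  assumes f: "finite S"
  shows "card {u\<in>S. box_adj K_adj K_adj (a,b) u} + 2 * (if (a,b) \<in> S then 1 else 0)
       = card {y. (a,y) \<in> S} + card {x. (x,b) \<in> S}"
proof -
  let ?Y = "{y. (a,y) \<in> S \<and> y \<noteq> b}" and ?X = "{x. (x,b) \<in> S \<and> x \<noteq> a}"
  have N: "{u\<in>S. box_adj K_adj K_adj (a,b) u} = Pair a ` ?Y \<union> (\<lambda>x. (x,b)) ` ?X"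
    unfolding box_adj_def K_adj_def by auto
  have fY: "finite ?Y" using fin_row[OF f, of a] by (rule finite_subset[rotated]) auto
  have fX: "finite ?X" using fin_col[OF f, of b] by (rule finite_subset[rotated]) auto
  have d: "Pair a ` ?Y \<inter> (\<lambda>x. (x,b)) ` ?X = {}" by auto
  have "card {u\<in>S. box_adj K_adj K_adj (a,b) u} = card (Pair a ` ?Y) + card ((\<lambda>x. (x,b)) ` ?X)"
    unfolding N using fY fX d by (intro card_Un_disjoint) auto
  also have "\<dots> = card ?Y + card ?X"
    by (subst card_image, simp add: inj_on_def)+ simp
  finally have c: "card {u\<in>S. box_adj K_adj K_adj (a,b) u} = card ?Y + card ?X" .
  have "card {y. (a,y) \<in> S} = card ?Y + (if (a,b) \<in> S then 1 else 0)"
    using card_split1[OF fin_row[OF f, of a], of b] by simp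
  moreover have "card {x. (x,b) \<in> S} = card ?X + (if (a,b) \<in> S then 1 else 0)"
    using card_split1[OF fin_col[OF f, of b], of a] by simp
  ultimately show ?thesis using c by simp
qed

lemma good_iso:
  assumes g: "good A B D (\<lambda>_. 0) (\<lambda>_. 0)" and f: "bij_betw f A A'" and h: "bij_betw h B B'"
    and fA: "finite A" and fB: "finite B"
  shows "good A' B' (map_prod f h ` D) (\<lambda>_. 0) (\<lambda>_. 0)"
  unfolding good_def
proof (intro conjI ballI)
  have DAB: "D \<subseteq> A \<times> B" using g good_sub by blast
  show "map_prod f h ` D \<subseteq> A' \<times> B'" using DAB f h unfolding bij_betw_def by auto
  fix x' y' assume x': "x' \<in> A'" and y': "y' \<in> B'"
  obtain x where x: "x \<in> A" "x' = f x" using x' f unfolding bij_betw_def by auto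
  obtain y where y: "y \<in> B" "y' = h y" using y' h unfolding bij_betw_def by auto
  have injf: "inj_on f A" and injh: "inj_on h B" using f h unfolding bij_betw_def by auto
  have mem: "(f u, h v) \<in> map_prod f h ` D \<longleftrightarrow> (u,v) \<in> D" if "u \<in> A" "v \<in> B" for u v
  proof
    assume "(f u, h v) \<in> map_prod f h ` D"
    then obtain u' v' where uv: "(u',v') \<in> D" "f u' = f u" "h v' = h v" by auto
    then have "u' \<in> A" "v' \<in> B" using DAB by auto
    then have "u' = u" "v' = v" using uv injf injh that unfolding inj_on_def by auto
    then show "(u,v) \<in> D" using uv by simp
  qed force
  have "{b\<in>B'. (f x, b) \<in> map_prod f h ` D} = h ` {b\<in>B. (x,b) \<in> D}"
  proof
    show "{b\<in>B'. (f x, b) \<in> map_prod f h ` D} \<subseteq> h ` {b\<in>B. (x,b) \<in> D}"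
    proof
      fix b assume b: "b \<in> {b\<in>B'. (f x, b) \<in> map_prod f h ` D}"
      then obtain v where v: "v \<in> B" "b = h v" using h unfolding bij_betw_def by auto
      then show "b \<in> h ` {b\<in>B. (x,b) \<in> D}" using b mem[OF x(1) v(1)] by auto
    qed
    show "h ` {b\<in>B. (x,b) \<in> D} \<subseteq> {b\<in>B'. (f x, b) \<in> map_prod f h ` D}"
      using h unfolding bij_betw_def by auto
  qed
  then have r: "rw (map_prod f h ` D) B' x' = rw D B x"
    unfolding rw_def using x(2) injh by (simp add: card_image inj_on_subset[of h B])
  have "{a\<in>A'. (a, h y) \<in> map_prod f h ` D} = f ` {a\<in>A. (a,y) \<in> D}"
  proof
    show "{a\<in>A'. (a, h y) \<in> map_prod f h ` D} \<subseteq> f ` {a\<in>A. (a,y) \<in> D}"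
    proof
      fix a assume a: "a \<in> {a\<in>A'. (a, h y) \<in> map_prod f h ` D}"
      then obtain u where u: "u \<in> A" "a = f u" using f unfolding bij_betw_def by auto
      then show "a \<in> f ` {a\<in>A. (a,y) \<in> D}" using a mem[OF u(1) y(1)] by auto
    qed
    show "f ` {a\<in>A. (a,y) \<in> D} \<subseteq> {a\<in>A'. (a, h y) \<in> map_prod f h ` D}"
      using f unfolding bij_betw_def by auto
  qed
  then have c: "cl (map_prod f h ` D) A' y' = cl D A y"
    unfolding cl_def using y(2) injf by (simp add: card_image inj_on_subset[of f A])
  show "(if (x',y') \<in> map_prod f h ` D then 4 else 2) \<le> rw (map_prod f h ` D) B' x' + 0 + cl (map_prod f h ` D) A' y' + 0"
    using good_le[OF g x(1) y(1)] r c mem[OF x(1) y(1)] x(2) y(2) by simp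
qed

lemma good_dom:
  assumes g: "good (K_V r) (K_V s) D (\<lambda>_. 0) (\<lambda>_. 0)"
  shows "total_k_dominating (box_V (K_V r) (K_V s)) (box_adj K_adj K_adj) 2 D"
  unfolding total_k_dominating_def
proof (intro conjI ballI)
  have DAB: "D \<subseteq> K_V r \<times> K_V s" using g good_sub by blast
  then show "D \<subseteq> box_V (K_V r) (K_V s)" unfolding box_V_def .
  have fD: "finite D" using DAB finite_subset unfolding K_V_def by blast
  fix v assume v: "v \<in> box_V (K_V r) (K_V s)"
  obtain a b where ab: "v = (a,b)" "a \<in> K_V r" "b \<in> K_V s" using v unfolding box_V_def by auto
  have e1: "{y. (a,y) \<in> D} = {y\<in>K_V s. (a,y) \<in> D}" using DAB by auto
  have e2: "{x. (x,b) \<in> D} = {x\<in>K_V r. (x,b) \<in> D}" using DAB by auto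
  have "card {u\<in>D. box_adj K_adj K_adj (a,b) u} + 2 * (if (a,b) \<in> D then 1 else 0)
       = rw D (K_V s) a + cl D (K_V r) b"
    using count_nb[OF fD, of a b] e1 e2 unfolding rw_def cl_def by simp
  moreover have "(if (a,b) \<in> D then 4 else 2) \<le> rw D (K_V s) a + 0 + cl D (K_V r) b + 0"
    using good_le[OF g ab(2,3)] .
  ultimately show "2 \<le> card {u\<in>D. box_adj K_adj K_adj v u}" using ab(1)
    by (cases "(a,b) \<in> D") auto
qed

lemma cert_gamma:
  assumes c: "cert A B t" and fA: "finite A" and fB: "finite B"
  shows "gamma_2t (box_V (K_V (card A)) (K_V (card B))) (box_adj K_adj K_adj) \<le> t"
proof -
  obtain D where D: "good A B D (\<lambda>_. 0) (\<lambda>_. 0)" "card D \<le> t" using c unfolding cert_def by blast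
  obtain f where f: "bij_betw f A {0..<card A}" using ex_bij_betw_finite_nat[OF fA] by blast
  obtain h where h: "bij_betw h B {0..<card B}" using ex_bij_betw_finite_nat[OF fB] by blast
  have g': "good (K_V (card A)) (K_V (card B)) (map_prod f h ` D) (\<lambda>_. 0) (\<lambda>_. 0)"
    using good_iso[OF D(1) f h fA fB] unfolding K_V_def .
  have dom: "total_k_dominating (box_V (K_V (card A)) (K_V (card B))) (box_adj K_adj K_adj) 2 (map_prod f h ` D)"
    using good_dom[OF g'] .
  have DAB: "D \<subseteq> A \<times> B" using D(1) good_sub by blast
  have "inj_on (map_prod f h) (A \<times> B)" using f h unfolding bij_betw_def
    by (simp add: map_prod_inj_on)
  then have "card (map_prod f h ` D) = card D" using DAB by (simp add: card_image inj_on_subset)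
  then have "gamma_2t (box_V (K_V (card A)) (K_V (card B))) (box_adj K_adj K_adj) \<le> card D"
    unfolding gamma_2t_def using dom by (intro Least_le) blast
  then show ?thesis using D(2) by simp
qed


theorem lemma6:
  fixes n m r s :: nat and A B :: "nat set" and S :: "(nat \<times> nat) set"
  assumes "n \<ge> 2" "m \<ge> 2" "2 \<le> r" "r \<le> n" "2 \<le> s" "s \<le> m"
    and "A \<subseteq> K_V n" "card A = r" "B \<subseteq> K_V m" "card B = s"
    and "total_k_dominating (box_V (K_V n) (K_V m)) (box_adj K_adj K_adj) 2 S"
  shows "card (S \<inter> ((A \<times> K_V m) \<union> (K_V n \<times> B)))
           \<ge> gamma_2t (box_V (K_V r) (K_V s)) (box_adj K_adj K_adj)"
proof -
  have fA: "finite A" using assms(7) finite_subset unfolding K_V_def by blast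
  have fB: "finite B" using assms(9) finite_subset unfolding K_V_def by blast
  have cA: "2 \<le> card A" and cB: "2 \<le> card B" using assms by auto
  have SV: "S \<subseteq> K_V n \<times> K_V m" and dom: "\<forall>v\<in>K_V n \<times> K_V m. 2 \<le> card {u\<in>S. box_adj K_adj K_adj v u}"
    using assms(11) unfolding total_k_dominating_def box_V_def by auto
  have fS: "finite S" using SV finite_subset unfolding K_V_def by blast
  define I where "I = S \<inter> (A \<times> B)"
  define R where "R = (\<lambda>a. card {y. (a,y) \<in> S \<and> y \<notin> B})"
  define C where "C = (\<lambda>b. card {x. (x,b) \<in> S \<and> x \<notin> A})"
  have IAB: "I \<subseteq> A \<times> B" unfolding I_def by auto
  have fR: "finite {y. (a,y) \<in> S \<and> y \<notin> B}" for a
    using fin_row[OF fS, of a] by (rule finite_subset[rotated]) auto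
  have fC: "finite {x. (x,b) \<in> S \<and> x \<notin> A}" for b
    using fin_col[OF fS, of b] by (rule finite_subset[rotated]) auto
  have rowc: "card {y. (a,y) \<in> S} = rw I B a + R a" if a: "a \<in> A" for a
  proof -
    have e: "{y. (a,y) \<in> S} = {y\<in>B. (a,y) \<in> I} \<union> {y. (a,y) \<in> S \<and> y \<notin> B}"
      unfolding I_def using a by auto
    have "card ({y\<in>B. (a,y) \<in> I} \<union> {y. (a,y) \<in> S \<and> y \<notin> B}) = card {y\<in>B. (a,y) \<in> I} + card {y. (a,y) \<in> S \<and> y \<notin> B}"
      using fB fR by (intro card_Un_disjoint) auto
    then show ?thesis unfolding e rw_def R_def by simp
  qed
  have colc: "card {x. (x,b) \<in> S} = cl I A b + C b" if b: "b \<in> B" for b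
  proof -
    have e: "{x. (x,b) \<in> S} = {x\<in>A. (x,b) \<in> I} \<union> {x. (x,b) \<in> S \<and> x \<notin> A}"
      unfolding I_def using b by auto
    have "card ({x\<in>A. (x,b) \<in> I} \<union> {x. (x,b) \<in> S \<and> x \<notin> A}) = card {x\<in>A. (x,b) \<in> I} + card {x. (x,b) \<in> S \<and> x \<notin> A}"
      using fA fC by (intro card_Un_disjoint) auto
    then show ?thesis unfolding e cl_def C_def by simp
  qed
  have g: "good A B I R C"
    unfolding good_def
  proof (intro conjI ballI)
    show "I \<subseteq> A \<times> B" using IAB .
    fix a b assume a: "a \<in> A" and b: "b \<in> B"
    have "(a,b) \<in> K_V n \<times> K_V m" using a b assms(7,9) by auto
    then have d: "2 \<le> card {u\<in>S. box_adj K_adj K_adj (a,b) u}" using dom by blast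
    have mem: "(a,b) \<in> I \<longleftrightarrow> (a,b) \<in> S" unfolding I_def using a b by auto
    have "card {u\<in>S. box_adj K_adj K_adj (a,b) u} + 2 * (if (a,b) \<in> S then 1 else 0)
       = rw I B a + R a + (cl I A b + C b)"
      using count_nb[OF fS, of a b] rowc[OF a] colc[OF b] by simp
    then show "(if (a,b) \<in> I then 4 else 2) \<le> rw I B a + R a + cl I A b + C b"
      using d mem by (cases "(a,b) \<in> S") auto
  qed
  define P where "P = Sigma A (\<lambda>a. {y. (a,y) \<in> S \<and> y \<notin> B})"
  define Q0 where "Q0 = Sigma B (\<lambda>b. {x. (x,b) \<in> S \<and> x \<notin> A})"
  define Q where "Q = prod.swap ` Q0"
  have cP: "card P = sum R A" unfolding P_def R_def using fA fR by simp
  have cQ0: "card Q0 = sum C B" unfolding Q0_def C_def using fB fC by simp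
  have cQ: "card Q = card Q0" unfolding Q_def by (simp add: card_image)
  have fI: "finite I" using IAB fA fB finite_subset by blast
  have fP: "finite P" unfolding P_def using fA fR by auto
  have fQ: "finite Q" unfolding Q_def Q0_def using fB fC by auto
  have d1: "I \<inter> P = {}" unfolding I_def P_def by auto
  have d2: "(I \<union> P) \<inter> Q = {}" unfolding I_def P_def Q_def Q0_def by auto
  have "card (I \<union> P \<union> Q) = card I + card P + card Q"
    using card_Un_disjoint[OF fI fP d1] card_Un_disjoint[of "I \<union> P" Q] fI fP fQ d2 by simp
  moreover have "I \<union> P \<union> Q \<subseteq> S \<inter> ((A \<times> K_V m) \<union> (K_V n \<times> B))"
    unfolding I_def P_def Q_def Q0_def using SV by auto
  moreover have "finite (S \<inter> ((A \<times> K_V m) \<union> (K_V n \<times> B)))" using fS by simp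
  ultimately have le: "tot A B I R C \<le> card (S \<inter> ((A \<times> K_V m) \<union> (K_V n \<times> B)))"
    unfolding tot_def using cP cQ cQ0 card_mono by metis
  have "cert A B (tot A B I R C)" using main_ind[OF fA fB cA cB g refl] .
  then have "cert A B (card (S \<inter> ((A \<times> K_V m) \<union> (K_V n \<times> B))))" using le cert_mono by blast
  then show ?thesis using cert_gamma[OF _ fA fB] assms(8,10) by blast
qed

end
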